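(* Let $\Phi$ be the set of formulas of $NOM$, preordered by $\phi\le\psi$ iff $\phi\vdash\psi$ is derivable in $NOM$, let $\mathcal L$ be the partially ordered quotient obtained by identifying $\phi$ and $\psi$ when $\phi\le\psi$ and $\psi\le\phi$, with quotient map $[\,\cdot\,]:\Phi\to\mathcal L$, and let $\neg[\phi]=[\neg\phi]$ (this is a well-defined order-reversing involution). Then $(\mathcal L,\le,\neg)$ is an orthomodular lattice, and for all formulas $\phi,\psi$: $[\phi\wedge\psi]=[\phi]\wedge[\psi]$, $[\phi\rightarrow\psi]=[\phi]\rightarrow[\psi]$ (Sasaki arrow), and $[\neg\phi]=\neg[\phi]$.
   Context: The propositional deductive system $NOM$: formulas are built from propositional letters using $\wedge$, $\rightarrow$, $\neg$. Sequents are $\phi_1,\ldots,\phi_n\vdash\psi$ ($n\ge0$) with antecedent a finite ordered sequence. With $\Gamma$ a finite possibly empty sequence of formulas and $\phi,\psi,\chi$ formulas, the rules of $NOM$ are: (assumption) $\Gamma,\phi\vdash\phi$; (cut) $\Gamma\vdash\phi$, $\Gamma,\phi\vdash\psi$ $\Rightarrow$ $\Gamma\vdash\psi$; (paste) $\Gamma\vdash\phi$, $\Gamma\vdash\psi$ $\Rightarrow$ $\Gamma,\phi\vdash\psi$; (compatible exchange) $\Gamma,\phi,\psi\vdash\phi$, $\Gamma,\phi,\psi\vdash\chi$, $\Gamma,\psi,\phi\vdash\psi$ $\Rightarrow$ $\Gamma,\psi,\phi\vdash\chi$; ($\wedge$-intro) $\Gamma\vdash\phi$, $\Gamma\vdash\psi$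 $\Rightarrow$ $\Gamma\vdash\phi\wedge\psi$; ($\wedge$-elim) $\Gamma\vdash\phi\wedge\psi$ $\Rightarrow$ $\Gamma\vdash\phi$ and $\Rightarrow$ $\Gamma\vdash\psi$; ($\rightarrow$-intro) $\Gamma,\phi\vdash\psi$ $\Rightarrow$ $\Gamma\vdash\phi\rightarrow\psi$; ($\rightarrow$-elim) $\Gamma\vdash\phi\rightarrow\psi$ $\Rightarrow$ $\Gamma,\phi\vdash\psi$; (excluded middle) $\Gamma,\phi\vdash\psi$, $\Gamma,\neg\phi\vdash\psi$ $\Rightarrow$ $\Gamma\vdash\psi$; (explosion) $\Gamma\vdash\neg\phi$ $\Rightarrow$ $\Gamma,\phi\vdash\psi$. An orthomodular lattice is a bounded lattice with an order-reversing involution $\neg$ satisfying $a\wedge\neg a=\bot$, $a\vee\neg a=\top$, and $a\le b\Rightarrow a\vee(\neg a\wedge b)=b$; in it $a\rightarrow b=\neg a\vee(a\wedge b)$. *)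

theory Defs
  imports Main
begin

datatype 'a form = Letter 'a | And "'a form" "'a form" | Imp "'a form" "'a form" | Neg "'a form"

text \<open>Derivable sequents; the antecedent is a list, and "Gamma, phi" is Gamma @ [phi].\<close>
inductive nom :: "'a form list \<Rightarrow> 'a form \<Rightarrow> bool" where
  assumption: "nom (\<Gamma> @ [\<phi>]) \<phi>"
| cut: "nom \<Gamma> \<phi> \<Longrightarrow> nom (\<Gamma> @ [\<phi>]) \<psi> \<Longrightarrow> nom \<Gamma> \<psi>"
| paste: "nom \<Gamma> \<phi> \<Longrightarrow> nom \<Gamma> \<psi> \<Longrightarrow> nom (\<Gamma> @ [\<phi>]) \<psi>"
| compat_exch: "nom (\<Gamma> @ [\<phi>, \<psi>]) \<phi> \<Longrightarrow> nom (\<Gamma> @ [\<phi>, \<psi>]) \<chi> \<Longrightarrow>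
      nom (\<Gamma> @ [\<psi>, \<phi>]) \<psi> \<Longrightarrow> nom (\<Gamma> @ [\<psi>, \<phi>]) \<chi>"
| and_intro: "nom \<Gamma> \<phi> \<Longrightarrow> nom \<Gamma> \<psi> \<Longrightarrow> nom \<Gamma> (And \<phi> \<psi>)"
| and_elim1: "nom \<Gamma> (And \<phi> \<psi>) \<Longrightarrow> nom \<Gamma> \<phi>"
| and_elim2: "nom \<Gamma> (And \<phi> \<psi>) \<Longrightarrow> nom \<Gamma> \<psi>"
| imp_intro: "nom (\<Gamma> @ [\<phi>]) \<psi> \<Longrightarrow> nom \<Gamma> (Imp \<phi> \<psi>)"
| imp_elim: "nom \<Gamma> (Imp \<phi> \<psi>) \<Longrightarrow> nom (\<Gamma> @ [\<phi>]) \<psi>"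
| excluded_middle: "nom (\<Gamma> @ [\<phi>]) \<psi> \<Longrightarrow> nom (\<Gamma> @ [Neg \<phi>]) \<psi> \<Longrightarrow> nom \<Gamma> \<psi>"
| explosion: "nom \<Gamma> (Neg \<phi>) \<Longrightarrow> nom (\<Gamma> @ [\<phi>]) \<psi>"

definition fle :: "'a form \<Rightarrow> 'a form \<Rightarrow> bool" where
  "fle \<phi> \<psi> \<longleftrightarrow> nom [\<phi>] \<psi>"

definition cls :: "'a form \<Rightarrow> 'a form set" where
  "cls \<phi> = {\<psi>. fle \<phi> \<psi> \<and> fle \<psi> \<phi>}"

definition Lcarrier :: "'a form set set" where
  "Lcarrier = range cls"

definition Lle :: "'a form set \<Rightarrow> 'a form set \<Rightarrow> bool" where
  "Lle A B \<longleftrightarrow> (\<exists>\<phi> \<psi>. A = cls \<phi> \<and> B = cls \<psi> \<and> fle \<phi> \<psi>)"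

definition Lneg :: "'a form set \<Rightarrow> 'a form set" where
  "Lneg A = cls (Neg (SOME \<phi>. A = cls \<phi>))"

definition partial_order_on' :: "'b set \<Rightarrow> ('b \<Rightarrow> 'b \<Rightarrow> bool) \<Rightarrow> bool" where
  "partial_order_on' S le \<longleftrightarrow>
     (\<forall>a\<in>S. le a a) \<and>
     (\<forall>a\<in>S. \<forall>b\<in>S. le a b \<and> le b a \<longrightarrow> a = b) \<and>
     (\<forall>a\<in>S. \<forall>b\<in>S. \<forall>c\<in>S. le a b \<and> le b c \<longrightarrow> le a c)"

definition is_meet :: "'b set \<Rightarrow> ('b \<Rightarrow> 'b \<Rightarrow> bool) \<Rightarrow> 'b \<Rightarrow> 'b \<Rightarrow> 'b \<Rightarrow> bool" where
  "is_meet S le a b m \<longleftrightarrow> m \<in> S \<and> le m a \<and> le m b \<and> (\<forall>x\<in>S. le x a \<and> le x b \<longrightarrow> le x m)"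

definition is_join :: "'b set \<Rightarrow> ('b \<Rightarrow> 'b \<Rightarrow> bool) \<Rightarrow> 'b \<Rightarrow> 'b \<Rightarrow> 'b \<Rightarrow> bool" where
  "is_join S le a b j \<longleftrightarrow> j \<in> S \<and> le a j \<and> le b j \<and> (\<forall>x\<in>S. le a x \<and> le b x \<longrightarrow> le j x)"

definition meet_in :: "'b set \<Rightarrow> ('b \<Rightarrow> 'b \<Rightarrow> bool) \<Rightarrow> 'b \<Rightarrow> 'b \<Rightarrow> 'b" where
  "meet_in S le a b = (THE m. is_meet S le a b m)"

definition join_in :: "'b set \<Rightarrow> ('b \<Rightarrow> 'b \<Rightarrow> bool) \<Rightarrow> 'b \<Rightarrow> 'b \<Rightarrow> 'b" where
  "join_in S le a b = (THE j. is_join S le a b j)"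

definition is_bot :: "'b set \<Rightarrow> ('b \<Rightarrow> 'b \<Rightarrow> bool) \<Rightarrow> 'b \<Rightarrow> bool" where
  "is_bot S le z \<longleftrightarrow> z \<in> S \<and> (\<forall>x\<in>S. le z x)"

definition is_top :: "'b set \<Rightarrow> ('b \<Rightarrow> 'b \<Rightarrow> bool) \<Rightarrow> 'b \<Rightarrow> bool" where
  "is_top S le t \<longleftrightarrow> t \<in> S \<and> (\<forall>x\<in>S. le x t)"

definition orthomodular_lattice_on ::
    "'b set \<Rightarrow> ('b \<Rightarrow> 'b \<Rightarrow> bool) \<Rightarrow> ('b \<Rightarrow> 'b) \<Rightarrow> bool" where
  "orthomodular_lattice_on S le neg \<longleftrightarrow>
     partial_order_on' S le \<and>
     (\<forall>a\<in>S. \<forall>b\<in>S. \<exists>m. is_meet S le a b m) \<and>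
     (\<forall>a\<in>S. \<forall>b\<in>S. \<exists>j. is_join S le a b j) \<and>
     (\<exists>z. is_bot S le z) \<and> (\<exists>t. is_top S le t) \<and>
     (\<forall>a\<in>S. neg a \<in> S) \<and>
     (\<forall>a\<in>S. neg (neg a) = a) \<and>
     (\<forall>a\<in>S. \<forall>b\<in>S. le a b \<longrightarrow> le (neg b) (neg a)) \<and>
     (\<forall>a\<in>S. is_bot S le (meet_in S le a (neg a))) \<and>
     (\<forall>a\<in>S. is_top S le (join_in S le a (neg a))) \<and>
     (\<forall>a\<in>S. \<forall>b\<in>S. le a b \<longrightarrow> join_in S le a (meet_in S le (neg a) b) = b)"

definition sasaki_in :: "'b set \<Rightarrow> ('b \<Rightarrow> 'b \<Rightarrow> bool) \<Rightarrow> ('b \<Rightarrow> 'b) \<Rightarrow> 'b \<Rightarrow> 'b \<Rightarrow> 'b" where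
  "sasaki_in S le neg a b = join_in S le (neg a) (meet_in S le a b)"

end

theory Submission
  imports Defs
begin

lemma weak: "nom \<Gamma> \<psi> \<Longrightarrow> nom (\<Delta> @ \<Gamma>) \<psi>"
proof (induction rule: nom.induct)
  case (assumption \<Gamma> \<phi>) then show ?case using nom.assumption[of "\<Delta> @ \<Gamma>" \<phi>] by simp
next
  case (cut \<Gamma> \<phi> \<psi>) then show ?case using nom.cut[of "\<Delta> @ \<Gamma>" \<phi> \<psi>] by simp
next
  case (paste \<Gamma> \<phi> \<psi>) then show ?case using nom.paste[of "\<Delta> @ \<Gamma>" \<phi> \<psi>] by simp
next
  case (compat_exch \<Gamma> \<phi> \<psi> \<chi>) then show ?case using nom.compat_exch[of "\<Delta> @ \<Gamma>" \<phi> \<psi> \<chi>] by simp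
next
  case (and_intro \<Gamma> \<phi> \<psi>) then show ?case using nom.and_intro[of "\<Delta> @ \<Gamma>" \<phi> \<psi>] by simp
next
  case (and_elim1 \<Gamma> \<phi> \<psi>) then show ?case using nom.and_elim1[of "\<Delta> @ \<Gamma>" \<phi> \<psi>] by simp
next
  case (and_elim2 \<Gamma> \<phi> \<psi>) then show ?case using nom.and_elim2[of "\<Delta> @ \<Gamma>" \<phi> \<psi>] by simp
next
  case (imp_intro \<Gamma> \<phi> \<psi>) then show ?case using nom.imp_intro[of "\<Delta> @ \<Gamma>" \<phi> \<psi>] by simp
next
  case (imp_elim \<Gamma> \<phi> \<psi>) then show ?case using nom.imp_elim[of "\<Delta> @ \<Gamma>" \<phi> \<psi>] by simp
next
  case (excluded_middle \<Gamma> \<phi> \<psi>) then show ?case using nom.excluded_middle[of "\<Delta> @ \<Gamma>" \<phi> \<psi>] by simp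
next
  case (explosion \<Gamma> \<phi> \<psi>) then show ?case using nom.explosion[of "\<Delta> @ \<Gamma>" \<phi> \<psi>] by simp
qed

lemma dn1:
  fixes a :: "'a form"
  shows "nom [(Neg (Neg a))] a"
proof -
  have s1: "nom [(Neg (Neg a)), a] a" using nom.assumption[of "[(Neg (Neg a))]" "a"]  by simp
  have s2: "nom [(Neg (Neg a))] (Neg (Neg a))" using nom.assumption[of "[]" "(Neg (Neg a))"]  by simp
  have s3: "nom [(Neg (Neg a)), (Neg a)] a" using nom.explosion[of "[(Neg (Neg a))]" "(Neg a)" "a"] s2 by simp
  have s4: "nom [(Neg (Neg a))] a" using nom.excluded_middle[of "[(Neg (Neg a))]" "a" "a"] s1 s3 by simp
  show ?thesis using s4 .
qed

lemma dn2:
  fixes a :: "'a form"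
  assumes h0: "nom [(Neg (Neg a))] a"
  shows "nom [a] (Neg (Neg a))"
proof -
  have s1: "nom [(Neg a)] (Neg a)" using nom.assumption[of "[]" "(Neg a)"]  by simp
  have s2: "nom [(Neg a), a] (Neg (Neg a))" using nom.explosion[of "[(Neg a)]" "a" "(Neg (Neg a))"] s1 by simp
  have s3: "nom [(Neg a)] (Imp a (Neg (Neg a)))" using nom.imp_intro[of "[(Neg a)]" "a" "(Neg (Neg a))"] s2 by simp
  have s4: "nom [(Neg (Neg a))] a" using weak[OF h0, of "[]"]  by simp
  have s5: "nom [(Neg (Neg a))] (Neg (Neg a))" using nom.assumption[of "[]" "(Neg (Neg a))"]  by simp
  have s6: "nom [(Neg (Neg a)), a] (Neg (Neg a))" using nom.paste[of "[(Neg (Neg a))]" "a" "(Neg (Neg a))"] s4 s5 by simp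
  have s7: "nom [(Neg (Neg a))] (Imp a (Neg (Neg a)))" using nom.imp_intro[of "[(Neg (Neg a))]" "a" "(Neg (Neg a))"] s6 by simp
  have s8: "nom [] (Imp a (Neg (Neg a)))" using nom.excluded_middle[of "[]" "(Neg a)" "(Imp a (Neg (Neg a)))"] s3 s7 by simp
  have s9: "nom [a] (Neg (Neg a))" using nom.imp_elim[of "[]" "a" "(Neg (Neg a))"] s8 by simp
  show ?thesis using s9 .
qed

lemma contra:
  fixes p q :: "'a form"
  assumes h0: "nom [p] q"
  shows "nom [(Neg q)] (Neg p)"
proof -
  have s1: "nom [(Neg q), p] q" using weak[OF h0, of "[(Neg q)]"]  by simp
  have s2: "nom [(Neg q), q, p] q" using weak[OF h0, of "[(Neg q), q]"]  by simp
  have s3: "nom [(Neg q)] (Neg q)" using nom.assumption[of "[]" "(Neg q)"]  by simp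
  have s4: "nom [(Neg q), q] p" using nom.explosion[of "[(Neg q)]" "q" "p"] s3 by simp
  have s5: "nom [(Neg q), q] (Neg p)" using nom.explosion[of "[(Neg q)]" "q" "(Neg p)"] s3 by simp
  have s6: "nom [(Neg q), q, p] (Neg p)" using nom.paste[of "[(Neg q), q]" "p" "(Neg p)"] s4 s5 by simp
  have s7: "nom [(Neg q), p] p" using nom.assumption[of "[(Neg q)]" "p"]  by simp
  have s8: "nom [(Neg q), p, q] p" using nom.paste[of "[(Neg q), p]" "q" "p"] s1 s7 by simp
  have s9: "nom [(Neg q), p, q] (Neg p)" using nom.compat_exch[of "[(Neg q)]" "q" "p" "(Neg p)"] s2 s6 s8 by simp
  have s10: "nom [(Neg q), p] (Neg p)" using nom.cut[of "[(Neg q), p]" "q" "(Neg p)"] s1 s9 by simp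
  have s11: "nom [(Neg q), (Neg p)] (Neg p)" using nom.assumption[of "[(Neg q)]" "(Neg p)"]  by simp
  have s12: "nom [(Neg q)] (Neg p)" using nom.excluded_middle[of "[(Neg q)]" "p" "(Neg p)"] s10 s11 by simp
  show ?thesis using s12 .
qed

lemma bot:
  fixes a b :: "'a form"
  shows "nom [(And a (Neg a))] b"
proof -
  have s1: "nom [(And a (Neg a))] (And a (Neg a))" using nom.assumption[of "[]" "(And a (Neg a))"]  by simp
  have s2: "nom [(And a (Neg a))] a" using nom.and_elim1[of "[(And a (Neg a))]" "a" "(Neg a)"] s1 by simp
  have s3: "nom [(And a (Neg a))] (Neg a)" using nom.and_elim2[of "[(And a (Neg a))]" "a" "(Neg a)"] s1 by simp
  have s4: "nom [(And a (Neg a)), a] b" using nom.explosion[of "[(And a (Neg a))]" "a" "b"] s3 by simp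
  have s5: "nom [(And a (Neg a))] b" using nom.cut[of "[(And a (Neg a))]" "a" "b"] s2 s4 by simp
  show ?thesis using s5 .
qed

lemma top:
  fixes a b :: "'a form"
  shows "nom [a] (Imp b b)"
proof -
  have s1: "nom [a, b] b" using nom.assumption[of "[a]" "b"]  by simp
  have s2: "nom [a] (Imp b b)" using nom.imp_intro[of "[a]" "b" "b"] s1 by simp
  show ?thesis using s2 .
qed

lemma imp1a:
  fixes p q :: "'a form"
  assumes h0: "nom [(Neg (Neg p))] p"
  assumes h1: "nom [p] (Neg (Neg p))"
  assumes h2: "nom [(And (Neg (Neg p)) (Neg (And p q)))] p"
  shows "nom [(And (Neg (Neg p)) (Neg (And p q)))] (Neg (Imp p q))"
proof -
  have s1: "nom [(And (Neg (Neg p)) (Neg (And p q))), (Imp p q), p] p" using nom.assumption[of "[(And (Neg (Neg p)) (Neg (And p q))), (Imp p q)]" "p"]  by simp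
  have s2: "nom [(And (Neg (Neg p)) (Neg (And p q))), (Imp p q)] (Imp p q)" using nom.assumption[of "[(And (Neg (Neg p)) (Neg (And p q)))]" "(Imp p q)"]  by simp
  have s3: "nom [(And (Neg (Neg p)) (Neg (And p q))), (Imp p q), p] q" using nom.imp_elim[of "[(And (Neg (Neg p)) (Neg (And p q))), (Imp p q)]" "p" "q"] s2 by simp
  have s4: "nom [(And (Neg (Neg p)) (Neg (And p q))), (Imp p q), p] (And p q)" using nom.and_intro[of "[(And (Neg (Neg p)) (Neg (And p q))), (Imp p q), p]" "p" "q"] s1 s3 by simp
  have s5: "nom [(And (Neg (Neg p)) (Neg (And p q))), (Neg p)] (Neg p)" using nom.assumption[of "[(And (Neg (Neg p)) (Neg (And p q)))]" "(Neg p)"]  by simp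
  have s6: "nom [(And (Neg (Neg p)) (Neg (And p q))), (Neg p), p] q" using nom.explosion[of "[(And (Neg (Neg p)) (Neg (And p q))), (Neg p)]" "p" "q"] s5 by simp
  have s7: "nom [(And (Neg (Neg p)) (Neg (And p q))), (Neg p)] (Imp p q)" using nom.imp_intro[of "[(And (Neg (Neg p)) (Neg (And p q))), (Neg p)]" "p" "q"] s6 by simp
  have s8: "nom [(And (Neg (Neg p)) (Neg (And p q))), (Neg p), (Imp p q)] (Neg p)" using nom.paste[of "[(And (Neg (Neg p)) (Neg (And p q))), (Neg p)]" "(Imp p q)" "(Neg p)"] s7 s5 by simp
  have s9: "nom [(And (Neg (Neg p)) (Neg (And p q)))] p" using weak[OF h2, of "[]"]  by simp
  have s10: "nom [(And (Neg (Neg p)) (Neg (And p q))), p] (Neg (Neg p))" using weak[OF h1, of "[(And (Neg (Neg p)) (Neg (And p q)))]"]  by simp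
  have s11: "nom [(And (Neg (Neg p)) (Neg (And p q)))] (Neg (Neg p))" using nom.cut[of "[(And (Neg (Neg p)) (Neg (And p q)))]" "p" "(Neg (Neg p))"] s9 s10 by simp
  have s12: "nom [(And (Neg (Neg p)) (Neg (And p q))), (Neg p)] (And p q)" using nom.explosion[of "[(And (Neg (Neg p)) (Neg (And p q)))]" "(Neg p)" "(And p q)"] s11 by simp
  have s13: "nom [(And (Neg (Neg p)) (Neg (And p q))), (Neg p), (Imp p q)] (And p q)" using nom.paste[of "[(And (Neg (Neg p)) (Neg (And p q))), (Neg p)]" "(Imp p q)" "(And p q)"] s7 s12 by simp
  have s14: "nom [(And (Neg (Neg p)) (Neg (And p q))), (Imp p q), (Neg p)] (Neg p)" using nom.assumption[of "[(And (Neg (Neg p)) (Neg (And p q))), (Imp p q)]" "(Neg p)"]  by simp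
  have s15: "nom [(And (Neg (Neg p)) (Neg (And p q))), (Imp p q), (Neg p), p] q" using nom.explosion[of "[(And (Neg (Neg p)) (Neg (And p q))), (Imp p q), (Neg p)]" "p" "q"] s14 by simp
  have s16: "nom [(And (Neg (Neg p)) (Neg (And p q))), (Imp p q), (Neg p)] (Imp p q)" using nom.imp_intro[of "[(And (Neg (Neg p)) (Neg (And p q))), (Imp p q), (Neg p)]" "p" "q"] s15 by simp
  have s17: "nom [(And (Neg (Neg p)) (Neg (And p q))), (Imp p q), (Neg p)] (And p q)" using nom.compat_exch[of "[(And (Neg (Neg p)) (Neg (And p q)))]" "(Neg p)" "(Imp p q)" "(And p q)"] s8 s13 s16 by simp
  have s18: "nom [(And (Neg (Neg p)) (Neg (And p q))), (Imp p q)] (And p q)" using nom.excluded_middle[of "[(And (Neg (Neg p)) (Neg (And p q))), (Imp p q)]" "p" "(And p q)"] s4 s17 by simp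
  have s19: "nom [(And (Neg (Neg p)) (Neg (And p q)))] (And (Neg (Neg p)) (Neg (And p q)))" using nom.assumption[of "[]" "(And (Neg (Neg p)) (Neg (And p q)))"]  by simp
  have s20: "nom [(And (Neg (Neg p)) (Neg (And p q)))] (Neg (And p q))" using nom.and_elim2[of "[(And (Neg (Neg p)) (Neg (And p q)))]" "(Neg (Neg p))" "(Neg (And p q))"] s19 by simp
  have s21: "nom [(And (Neg (Neg p)) (Neg (And p q))), (And p q)] (Imp p q)" using nom.explosion[of "[(And (Neg (Neg p)) (Neg (And p q)))]" "(And p q)" "(Imp p q)"] s20 by simp
  have s22: "nom [(And (Neg (Neg p)) (Neg (And p q))), (And p q)] (And p q)" using nom.assumption[of "[(And (Neg (Neg p)) (Neg (And p q)))]" "(And p q)"]  by simp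
  have s23: "nom [(And (Neg (Neg p)) (Neg (And p q))), (And p q), (Imp p q)] (And p q)" using nom.paste[of "[(And (Neg (Neg p)) (Neg (And p q))), (And p q)]" "(Imp p q)" "(And p q)"] s21 s22 by simp
  have s24: "nom [(And (Neg (Neg p)) (Neg (And p q))), (And p q)] (Neg (Imp p q))" using nom.explosion[of "[(And (Neg (Neg p)) (Neg (And p q)))]" "(And p q)" "(Neg (Imp p q))"] s20 by simp
  have s25: "nom [(And (Neg (Neg p)) (Neg (And p q))), (And p q), (Imp p q)] (Neg (Imp p q))" using nom.paste[of "[(And (Neg (Neg p)) (Neg (And p q))), (And p q)]" "(Imp p q)" "(Neg (Imp p q))"] s21 s24 by simp
  have s26: "nom [(And (Neg (Neg p)) (Neg (And p q))), (Imp p q), (And p q)] (And p q)" using nom.assumption[of "[(And (Neg (Neg p)) (Neg (And p q))), (Imp p q)]" "(And p q)"]  by simp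
  have s27: "nom [(And (Neg (Neg p)) (Neg (And p q))), (Imp p q), (And p q)] p" using nom.and_elim1[of "[(And (Neg (Neg p)) (Neg (And p q))), (Imp p q), (And p q)]" "p" "q"] s26 by simp
  have s28: "nom [(And (Neg (Neg p)) (Neg (And p q))), (Imp p q), (And p q)] q" using nom.and_elim2[of "[(And (Neg (Neg p)) (Neg (And p q))), (Imp p q), (And p q)]" "p" "q"] s26 by simp
  have s29: "nom [(And (Neg (Neg p)) (Neg (And p q))), (Imp p q), (And p q), p] q" using nom.paste[of "[(And (Neg (Neg p)) (Neg (And p q))), (Imp p q), (And p q)]" "p" "q"] s27 s28 by simp
  have s30: "nom [(And (Neg (Neg p)) (Neg (And p q))), (Imp p q), (And p q)] (Imp p q)" using nom.imp_intro[of "[(And (Neg (Neg p)) (Neg (And p q))), (Imp p q), (And p q)]" "p" "q"] s29 by simp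
  have s31: "nom [(And (Neg (Neg p)) (Neg (And p q))), (Imp p q), (And p q)] (Neg (Imp p q))" using nom.compat_exch[of "[(And (Neg (Neg p)) (Neg (And p q)))]" "(And p q)" "(Imp p q)" "(Neg (Imp p q))"] s23 s25 s30 by simp
  have s32: "nom [(And (Neg (Neg p)) (Neg (And p q))), (Imp p q)] (Neg (Imp p q))" using nom.cut[of "[(And (Neg (Neg p)) (Neg (And p q))), (Imp p q)]" "(And p q)" "(Neg (Imp p q))"] s18 s31 by simp
  have s33: "nom [(And (Neg (Neg p)) (Neg (And p q))), (Neg (Imp p q))] (Neg (Imp p q))" using nom.assumption[of "[(And (Neg (Neg p)) (Neg (And p q)))]" "(Neg (Imp p q))"]  by simp
  have s34: "nom [(And (Neg (Neg p)) (Neg (And p q)))] (Neg (Imp p q))" using nom.excluded_middle[of "[(And (Neg (Neg p)) (Neg (And p q)))]" "(Imp p q)" "(Neg (Imp p q))"] s32 s33 by simp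
  show ?thesis using s34 .
qed

lemma oma:
  fixes a b :: "'a form"
  assumes h0: "nom [a] b"
  assumes h1: "nom [(And (Neg a) (Neg (And (Neg a) b)))] (Neg a)"
  shows "nom [(And (Neg a) (Neg (And (Neg a) b)))] (Neg b)"
proof -
  have s1: "nom [(And (Neg a) (Neg (And (Neg a) b))), a] b" using weak[OF h0, of "[(And (Neg a) (Neg (And (Neg a) b)))]"]  by simp
  have s2: "nom [(And (Neg a) (Neg (And (Neg a) b))), a] a" using nom.assumption[of "[(And (Neg a) (Neg (And (Neg a) b)))]" "a"]  by simp
  have s3: "nom [(And (Neg a) (Neg (And (Neg a) b))), a, b] a" using nom.paste[of "[(And (Neg a) (Neg (And (Neg a) b))), a]" "b" "a"] s1 s2 by simp
  have s4: "nom [(And (Neg a) (Neg (And (Neg a) b)))] (Neg a)" using weak[OF h1, of "[]"]  by simp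
  have s5: "nom [(And (Neg a) (Neg (And (Neg a) b))), a] (Neg a)" using nom.explosion[of "[(And (Neg a) (Neg (And (Neg a) b)))]" "a" "(Neg a)"] s4 by simp
  have s6: "nom [(And (Neg a) (Neg (And (Neg a) b))), a, b] (Neg a)" using nom.paste[of "[(And (Neg a) (Neg (And (Neg a) b))), a]" "b" "(Neg a)"] s1 s5 by simp
  have s7: "nom [(And (Neg a) (Neg (And (Neg a) b))), b, a] b" using weak[OF h0, of "[(And (Neg a) (Neg (And (Neg a) b))), b]"]  by simp
  have s8: "nom [(And (Neg a) (Neg (And (Neg a) b))), b, a] (Neg a)" using nom.compat_exch[of "[(And (Neg a) (Neg (And (Neg a) b)))]" "a" "b" "(Neg a)"] s3 s6 s7 by simp
  have s9: "nom [(And (Neg a) (Neg (And (Neg a) b))), b, (Neg a)] (Neg a)" using nom.assumption[of "[(And (Neg a) (Neg (And (Neg a) b))), b]" "(Neg a)"]  by simp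
  have s10: "nom [(And (Neg a) (Neg (And (Neg a) b))), b] (Neg a)" using nom.excluded_middle[of "[(And (Neg a) (Neg (And (Neg a) b))), b]" "a" "(Neg a)"] s8 s9 by simp
  have s11: "nom [(And (Neg a) (Neg (And (Neg a) b))), b] b" using nom.assumption[of "[(And (Neg a) (Neg (And (Neg a) b)))]" "b"]  by simp
  have s12: "nom [(And (Neg a) (Neg (And (Neg a) b))), b] (And (Neg a) b)" using nom.and_intro[of "[(And (Neg a) (Neg (And (Neg a) b))), b]" "(Neg a)" "b"] s10 s11 by simp
  have s13: "nom [(And (Neg a) (Neg (And (Neg a) b))), (And (Neg a) b)] (And (Neg a) b)" using nom.assumption[of "[(And (Neg a) (Neg (And (Neg a) b)))]" "(And (Neg a) b)"]  by simp
  have s14: "nom [(And (Neg a) (Neg (And (Neg a) b))), (And (Neg a) b)] b" using nom.and_elim2[of "[(And (Neg a) (Neg (And (Neg a) b))), (And (Neg a) b)]" "(Neg a)" "b"] s13 by simp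
  have s15: "nom [(And (Neg a) (Neg (And (Neg a) b))), (And (Neg a) b), b] (And (Neg a) b)" using nom.paste[of "[(And (Neg a) (Neg (And (Neg a) b))), (And (Neg a) b)]" "b" "(And (Neg a) b)"] s14 s13 by simp
  have s16: "nom [(And (Neg a) (Neg (And (Neg a) b)))] (And (Neg a) (Neg (And (Neg a) b)))" using nom.assumption[of "[]" "(And (Neg a) (Neg (And (Neg a) b)))"]  by simp
  have s17: "nom [(And (Neg a) (Neg (And (Neg a) b)))] (Neg (And (Neg a) b))" using nom.and_elim2[of "[(And (Neg a) (Neg (And (Neg a) b)))]" "(Neg a)" "(Neg (And (Neg a) b))"] s16 by simp
  have s18: "nom [(And (Neg a) (Neg (And (Neg a) b))), (And (Neg a) b)] (Neg b)" using nom.explosion[of "[(And (Neg a) (Neg (And (Neg a) b)))]" "(And (Neg a) b)" "(Neg b)"] s17 by simp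
  have s19: "nom [(And (Neg a) (Neg (And (Neg a) b))), (And (Neg a) b), b] (Neg b)" using nom.paste[of "[(And (Neg a) (Neg (And (Neg a) b))), (And (Neg a) b)]" "b" "(Neg b)"] s14 s18 by simp
  have s20: "nom [(And (Neg a) (Neg (And (Neg a) b))), b, (And (Neg a) b)] (And (Neg a) b)" using nom.assumption[of "[(And (Neg a) (Neg (And (Neg a) b))), b]" "(And (Neg a) b)"]  by simp
  have s21: "nom [(And (Neg a) (Neg (And (Neg a) b))), b, (And (Neg a) b)] b" using nom.and_elim2[of "[(And (Neg a) (Neg (And (Neg a) b))), b, (And (Neg a) b)]" "(Neg a)" "b"] s20 by simp
  have s22: "nom [(And (Neg a) (Neg (And (Neg a) b))), b, (And (Neg a) b)] (Neg b)" using nom.compat_exch[of "[(And (Neg a) (Neg (And (Neg a) b)))]" "(And (Neg a) b)" "b" "(Neg b)"] s15 s19 s21 by simp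
  have s23: "nom [(And (Neg a) (Neg (And (Neg a) b))), b] (Neg b)" using nom.cut[of "[(And (Neg a) (Neg (And (Neg a) b))), b]" "(And (Neg a) b)" "(Neg b)"] s12 s22 by simp
  have s24: "nom [(And (Neg a) (Neg (And (Neg a) b))), (Neg b)] (Neg b)" using nom.assumption[of "[(And (Neg a) (Neg (And (Neg a) b)))]" "(Neg b)"]  by simp
  have s25: "nom [(And (Neg a) (Neg (And (Neg a) b)))] (Neg b)" using nom.excluded_middle[of "[(And (Neg a) (Neg (And (Neg a) b)))]" "b" "(Neg b)"] s23 s24 by simp
  show ?thesis using s25 .
qed

lemma imp2:
  fixes p q :: "'a form"
  shows "nom [(Neg (And (Neg (Neg p)) (Neg (And p q))))] (Imp p q)"
proof -
  have s1: "nom [(Neg (And (Neg (Neg p)) (Neg (And p q)))), (Imp p q)] (Imp p q)" using nom.assumption[of "[(Neg (And (Neg (Neg p)) (Neg (And p q))))]" "(Imp p q)"]  by simp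
  have s2: "nom [(Neg (And (Neg (Neg p)) (Neg (And p q)))), (Neg (Imp p q)), (Neg p)] (Neg p)" using nom.assumption[of "[(Neg (And (Neg (Neg p)) (Neg (And p q)))), (Neg (Imp p q))]" "(Neg p)"]  by simp
  have s3: "nom [(Neg (And (Neg (Neg p)) (Neg (And p q)))), (Neg (Imp p q)), (Neg p), p] q" using nom.explosion[of "[(Neg (And (Neg (Neg p)) (Neg (And p q)))), (Neg (Imp p q)), (Neg p)]" "p" "q"] s2 by simp
  have s4: "nom [(Neg (And (Neg (Neg p)) (Neg (And p q)))), (Neg (Imp p q)), (Neg p)] (Imp p q)" using nom.imp_intro[of "[(Neg (And (Neg (Neg p)) (Neg (And p q)))), (Neg (Imp p q)), (Neg p)]" "p" "q"] s3 by simp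
  have s5: "nom [(Neg (And (Neg (Neg p)) (Neg (And p q)))), (Neg (Imp p q))] (Neg (Imp p q))" using nom.assumption[of "[(Neg (And (Neg (Neg p)) (Neg (And p q))))]" "(Neg (Imp p q))"]  by simp
  have s6: "nom [(Neg (And (Neg (Neg p)) (Neg (And p q)))), (Neg (Imp p q)), (Imp p q)] (Neg p)" using nom.explosion[of "[(Neg (And (Neg (Neg p)) (Neg (And p q)))), (Neg (Imp p q))]" "(Imp p q)" "(Neg p)"] s5 by simp
  have s7: "nom [(Neg (And (Neg (Neg p)) (Neg (And p q)))), (Neg (Imp p q)), (Imp p q)] (Imp p q)" using nom.assumption[of "[(Neg (And (Neg (Neg p)) (Neg (And p q)))), (Neg (Imp p q))]" "(Imp p q)"]  by simp
  have s8: "nom [(Neg (And (Neg (Neg p)) (Neg (And p q)))), (Neg (Imp p q)), (Imp p q), (Neg p)] (Imp p q)" using nom.paste[of "[(Neg (And (Neg (Neg p)) (Neg (And p q)))), (Neg (Imp p q)), (Imp p q)]" "(Neg p)" "(Imp p q)"] s6 s7 by simp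
  have s9: "nom [(Neg (And (Neg (Neg p)) (Neg (And p q)))), (Neg (Imp p q)), (Imp p q)] (Neg (Neg p))" using nom.explosion[of "[(Neg (And (Neg (Neg p)) (Neg (And p q)))), (Neg (Imp p q))]" "(Imp p q)" "(Neg (Neg p))"] s5 by simp
  have s10: "nom [(Neg (And (Neg (Neg p)) (Neg (And p q)))), (Neg (Imp p q)), (Imp p q), (Neg p)] (Neg (Neg p))" using nom.paste[of "[(Neg (And (Neg (Neg p)) (Neg (And p q)))), (Neg (Imp p q)), (Imp p q)]" "(Neg p)" "(Neg (Neg p))"] s6 s9 by simp
  have s11: "nom [(Neg (And (Neg (Neg p)) (Neg (And p q)))), (Neg (Imp p q)), (Neg p), (Imp p q)] (Neg p)" using nom.paste[of "[(Neg (And (Neg (Neg p)) (Neg (And p q)))), (Neg (Imp p q)), (Neg p)]" "(Imp p q)" "(Neg p)"] s4 s2 by simp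
  have s12: "nom [(Neg (And (Neg (Neg p)) (Neg (And p q)))), (Neg (Imp p q)), (Neg p), (Imp p q)] (Neg (Neg p))" using nom.compat_exch[of "[(Neg (And (Neg (Neg p)) (Neg (And p q)))), (Neg (Imp p q))]" "(Imp p q)" "(Neg p)" "(Neg (Neg p))"] s8 s10 s11 by simp
  have s13: "nom [(Neg (And (Neg (Neg p)) (Neg (And p q)))), (Neg (Imp p q)), (Neg p)] (Neg (Neg p))" using nom.cut[of "[(Neg (And (Neg (Neg p)) (Neg (And p q)))), (Neg (Imp p q)), (Neg p)]" "(Imp p q)" "(Neg (Neg p))"] s4 s12 by simp
  have s14: "nom [(Neg (And (Neg (Neg p)) (Neg (And p q)))), (Neg (Imp p q)), (Neg (Neg p))] (Neg (Neg p))" using nom.assumption[of "[(Neg (And (Neg (Neg p)) (Neg (And p q)))), (Neg (Imp p q))]" "(Neg (Neg p))"]  by simp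
  have s15: "nom [(Neg (And (Neg (Neg p)) (Neg (And p q)))), (Neg (Imp p q))] (Neg (Neg p))" using nom.excluded_middle[of "[(Neg (And (Neg (Neg p)) (Neg (And p q)))), (Neg (Imp p q))]" "(Neg p)" "(Neg (Neg p))"] s13 s14 by simp
  have s16: "nom [(Neg (And (Neg (Neg p)) (Neg (And p q)))), (Neg (Imp p q)), (And p q)] (And p q)" using nom.assumption[of "[(Neg (And (Neg (Neg p)) (Neg (And p q)))), (Neg (Imp p q))]" "(And p q)"]  by simp
  have s17: "nom [(Neg (And (Neg (Neg p)) (Neg (And p q)))), (Neg (Imp p q)), (And p q)] p" using nom.and_elim1[of "[(Neg (And (Neg (Neg p)) (Neg (And p q)))), (Neg (Imp p q)), (And p q)]" "p" "q"] s16 by simp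
  have s18: "nom [(Neg (And (Neg (Neg p)) (Neg (And p q)))), (Neg (Imp p q)), (And p q)] q" using nom.and_elim2[of "[(Neg (And (Neg (Neg p)) (Neg (And p q)))), (Neg (Imp p q)), (And p q)]" "p" "q"] s16 by simp
  have s19: "nom [(Neg (And (Neg (Neg p)) (Neg (And p q)))), (Neg (Imp p q)), (And p q), p] q" using nom.paste[of "[(Neg (And (Neg (Neg p)) (Neg (And p q)))), (Neg (Imp p q)), (And p q)]" "p" "q"] s17 s18 by simp
  have s20: "nom [(Neg (And (Neg (Neg p)) (Neg (And p q)))), (Neg (Imp p q)), (And p q)] (Imp p q)" using nom.imp_intro[of "[(Neg (And (Neg (Neg p)) (Neg (And p q)))), (Neg (Imp p q)), (And p q)]" "p" "q"] s19 by simp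
  have s21: "nom [(Neg (And (Neg (Neg p)) (Neg (And p q)))), (Neg (Imp p q)), (Imp p q)] (And p q)" using nom.explosion[of "[(Neg (And (Neg (Neg p)) (Neg (And p q)))), (Neg (Imp p q))]" "(Imp p q)" "(And p q)"] s5 by simp
  have s22: "nom [(Neg (And (Neg (Neg p)) (Neg (And p q)))), (Neg (Imp p q)), (Imp p q), (And p q)] (Imp p q)" using nom.paste[of "[(Neg (And (Neg (Neg p)) (Neg (And p q)))), (Neg (Imp p q)), (Imp p q)]" "(And p q)" "(Imp p q)"] s21 s7 by simp
  have s23: "nom [(Neg (And (Neg (Neg p)) (Neg (And p q)))), (Neg (Imp p q)), (Imp p q)] (Neg (And p q))" using nom.explosion[of "[(Neg (And (Neg (Neg p)) (Neg (And p q)))), (Neg (Imp p q))]" "(Imp p q)" "(Neg (And p q))"] s5 by simp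
  have s24: "nom [(Neg (And (Neg (Neg p)) (Neg (And p q)))), (Neg (Imp p q)), (Imp p q), (And p q)] (Neg (And p q))" using nom.paste[of "[(Neg (And (Neg (Neg p)) (Neg (And p q)))), (Neg (Imp p q)), (Imp p q)]" "(And p q)" "(Neg (And p q))"] s21 s23 by simp
  have s25: "nom [(Neg (And (Neg (Neg p)) (Neg (And p q)))), (Neg (Imp p q)), (And p q), (Imp p q)] (And p q)" using nom.paste[of "[(Neg (And (Neg (Neg p)) (Neg (And p q)))), (Neg (Imp p q)), (And p q)]" "(Imp p q)" "(And p q)"] s20 s16 by simp
  have s26: "nom [(Neg (And (Neg (Neg p)) (Neg (And p q)))), (Neg (Imp p q)), (And p q), (Imp p q)] (Neg (And p q))" using nom.compat_exch[of "[(Neg (And (Neg (Neg p)) (Neg (And p q)))), (Neg (Imp p q))]" "(Imp p q)" "(And p q)" "(Neg (And p q))"] s22 s24 s25 by simp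
  have s27: "nom [(Neg (And (Neg (Neg p)) (Neg (And p q)))), (Neg (Imp p q)), (And p q)] (Neg (And p q))" using nom.cut[of "[(Neg (And (Neg (Neg p)) (Neg (And p q)))), (Neg (Imp p q)), (And p q)]" "(Imp p q)" "(Neg (And p q))"] s20 s26 by simp
  have s28: "nom [(Neg (And (Neg (Neg p)) (Neg (And p q)))), (Neg (Imp p q)), (Neg (And p q))] (Neg (And p q))" using nom.assumption[of "[(Neg (And (Neg (Neg p)) (Neg (And p q)))), (Neg (Imp p q))]" "(Neg (And p q))"]  by simp
  have s29: "nom [(Neg (And (Neg (Neg p)) (Neg (And p q)))), (Neg (Imp p q))] (Neg (And p q))" using nom.excluded_middle[of "[(Neg (And (Neg (Neg p)) (Neg (And p q)))), (Neg (Imp p q))]" "(And p q)" "(Neg (And p q))"] s27 s28 by simp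
  have s30: "nom [(Neg (And (Neg (Neg p)) (Neg (And p q)))), (Neg (Imp p q))] (And (Neg (Neg p)) (Neg (And p q)))" using nom.and_intro[of "[(Neg (And (Neg (Neg p)) (Neg (And p q)))), (Neg (Imp p q))]" "(Neg (Neg p))" "(Neg (And p q))"] s15 s29 by simp
  have s31: "nom [(Neg (And (Neg (Neg p)) (Neg (And p q))))] (Neg (And (Neg (Neg p)) (Neg (And p q))))" using nom.assumption[of "[]" "(Neg (And (Neg (Neg p)) (Neg (And p q))))"]  by simp
  have s32: "nom [(Neg (And (Neg (Neg p)) (Neg (And p q)))), (And (Neg (Neg p)) (Neg (And p q)))] (Neg (Imp p q))" using nom.explosion[of "[(Neg (And (Neg (Neg p)) (Neg (And p q))))]" "(And (Neg (Neg p)) (Neg (And p q)))" "(Neg (Imp p q))"] s31 by simp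
  have s33: "nom [(Neg (And (Neg (Neg p)) (Neg (And p q)))), (And (Neg (Neg p)) (Neg (And p q)))] (And (Neg (Neg p)) (Neg (And p q)))" using nom.assumption[of "[(Neg (And (Neg (Neg p)) (Neg (And p q))))]" "(And (Neg (Neg p)) (Neg (And p q)))"]  by simp
  have s34: "nom [(Neg (And (Neg (Neg p)) (Neg (And p q)))), (And (Neg (Neg p)) (Neg (And p q))), (Neg (Imp p q))] (And (Neg (Neg p)) (Neg (And p q)))" using nom.paste[of "[(Neg (And (Neg (Neg p)) (Neg (And p q)))), (And (Neg (Neg p)) (Neg (And p q)))]" "(Neg (Imp p q))" "(And (Neg (Neg p)) (Neg (And p q)))"] s32 s33 by simp
  have s35: "nom [(Neg (And (Neg (Neg p)) (Neg (And p q)))), (And (Neg (Neg p)) (Neg (And p q)))] (Imp p q)" using nom.explosion[of "[(Neg (And (Neg (Neg p)) (Neg (And p q))))]" "(And (Neg (Neg p)) (Neg (And p q)))" "(Imp p q)"] s31 by simp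
  have s36: "nom [(Neg (And (Neg (Neg p)) (Neg (And p q)))), (And (Neg (Neg p)) (Neg (And p q))), (Neg (Imp p q))] (Imp p q)" using nom.paste[of "[(Neg (And (Neg (Neg p)) (Neg (And p q)))), (And (Neg (Neg p)) (Neg (And p q)))]" "(Neg (Imp p q))" "(Imp p q)"] s32 s35 by simp
  have s37: "nom [(Neg (And (Neg (Neg p)) (Neg (And p q)))), (Neg (Imp p q)), (And (Neg (Neg p)) (Neg (And p q)))] (Neg (Imp p q))" using nom.paste[of "[(Neg (And (Neg (Neg p)) (Neg (And p q)))), (Neg (Imp p q))]" "(And (Neg (Neg p)) (Neg (And p q)))" "(Neg (Imp p q))"] s30 s5 by simp
  have s38: "nom [(Neg (And (Neg (Neg p)) (Neg (And p q)))), (Neg (Imp p q)), (And (Neg (Neg p)) (Neg (And p q)))] (Imp p q)" using nom.compat_exch[of "[(Neg (And (Neg (Neg p)) (Neg (And p q))))]" "(And (Neg (Neg p)) (Neg (And p q)))" "(Neg (Imp p q))" "(Imp p q)"] s34 s36 s37 by simp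
  have s39: "nom [(Neg (And (Neg (Neg p)) (Neg (And p q)))), (Neg (Imp p q))] (Imp p q)" using nom.cut[of "[(Neg (And (Neg (Neg p)) (Neg (And p q)))), (Neg (Imp p q))]" "(And (Neg (Neg p)) (Neg (And p q)))" "(Imp p q)"] s30 s38 by simp
  have s40: "nom [(Neg (And (Neg (Neg p)) (Neg (And p q))))] (Imp p q)" using nom.excluded_middle[of "[(Neg (And (Neg (Neg p)) (Neg (And p q))))]" "(Imp p q)" "(Imp p q)"] s1 s39 by simp
  show ?thesis using s40 .
qed
lemma fle_refl: "fle a a"
  unfolding fle_def using nom.assumption[of "[]" a] by simp

lemma fle_trans: "fle a b \<Longrightarrow> fle b c \<Longrightarrow> fle a c"
  unfolding fle_def using nom.cut[of "[a]" b c] weak[of "[b]" c "[a]"] by simp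

lemma DN1: "fle (Neg (Neg a)) a" unfolding fle_def by (rule dn1)
lemma DN2: "fle a (Neg (Neg a))" unfolding fle_def by (rule dn2[OF dn1])
lemma CONTRA: "fle a b \<Longrightarrow> fle (Neg b) (Neg a)" unfolding fle_def by (rule contra)
lemma AND1: "fle (And a b) a"
  unfolding fle_def using nom.and_elim1[of "[And a b]" a b] nom.assumption[of "[]" "And a b"] by simp
lemma AND2: "fle (And a b) b"
  unfolding fle_def using nom.and_elim2[of "[And a b]" a b] nom.assumption[of "[]" "And a b"] by simp
lemma AND3: "fle c a \<Longrightarrow> fle c b \<Longrightarrow> fle c (And a b)"
  unfolding fle_def by (rule nom.and_intro)
lemma BOT: "fle (And a (Neg a)) b" unfolding fle_def by (rule bot)
lemma TOP: "fle b (Imp a a)" unfolding fle_def by (rule top)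

lemma IMP1: "fle (Imp p q) (Neg (And (Neg (Neg p)) (Neg (And p q))))"
proof -
  have h2: "nom [And (Neg (Neg p)) (Neg (And p q))] p"
    using fle_trans[OF AND1 DN1] unfolding fle_def .
  have "fle (And (Neg (Neg p)) (Neg (And p q))) (Neg (Imp p q))"
    unfolding fle_def by (rule imp1a[OF dn1 dn2[OF dn1] h2])
  then have "fle (Neg (Neg (Imp p q))) (Neg (And (Neg (Neg p)) (Neg (And p q))))" by (rule CONTRA)
  then show ?thesis using fle_trans[OF DN2] by blast
qed

lemma IMP2: "fle (Neg (And (Neg (Neg p)) (Neg (And p q)))) (Imp p q)"
  unfolding fle_def by (rule imp2)

lemma OM: assumes "fle a b" shows "fle b (Neg (And (Neg a) (Neg (And (Neg a) b))))"
proof -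
  have h1: "nom [And (Neg a) (Neg (And (Neg a) b))] (Neg a)" using AND1 unfolding fle_def .
  have "fle (And (Neg a) (Neg (And (Neg a) b))) (Neg b)"
    unfolding fle_def by (rule oma[OF assms[unfolded fle_def] h1])
  then have "fle (Neg (Neg b)) (Neg (And (Neg a) (Neg (And (Neg a) b))))" by (rule CONTRA)
  then show ?thesis using fle_trans[OF DN2] by blast
qed


lemma cls_eq: "cls a = cls b \<longleftrightarrow> fle a b \<and> fle b a"
proof
  assume "cls a = cls b"
  moreover have "a \<in> cls a" unfolding cls_def using fle_refl by simp
  ultimately have "a \<in> cls b" by simp
  then show "fle a b \<and> fle b a" unfolding cls_def by simp
next
  assume "fle a b \<and> fle b a"
  then show "cls a = cls b" unfolding cls_def using fle_trans by blast
qed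

lemma Lle_cls: "Lle (cls a) (cls b) \<longleftrightarrow> fle a b"
proof
  assume "Lle (cls a) (cls b)"
  then obtain x y where xy: "cls a = cls x" "cls b = cls y" "fle x y" unfolding Lle_def by blast
  from xy(1) have "fle a x" by (simp add: cls_eq)
  moreover from xy(2) have "fle y b" by (simp add: cls_eq)
  ultimately show "fle a b" using xy(3) fle_trans by blast
qed (auto simp: Lle_def)

lemma Lneg_cls: "Lneg (cls a) = cls (Neg a)"
proof -
  define s where "s = (SOME x. cls a = cls x)"
  have "\<exists>x. cls a = cls x" by blast
  then have "cls a = cls s" unfolding s_def by (rule someI_ex)
  then have "fle a s" "fle s a" by (simp_all add: cls_eq)
  then have "fle (Neg a) (Neg s)" "fle (Neg s) (Neg a)" by (simp_all add: CONTRA)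
  then have "cls (Neg s) = cls (Neg a)" by (simp add: cls_eq)
  then show ?thesis unfolding Lneg_def s_def by simp
qed

lemma Lcar: "x \<in> Lcarrier \<longleftrightarrow> (\<exists>\<phi>. x = cls \<phi>)" unfolding Lcarrier_def by auto
lemma Lall: "(\<forall>x\<in>Lcarrier. P x) \<longleftrightarrow> (\<forall>\<phi>. P (cls \<phi>))" unfolding Lcarrier_def by auto
lemma Lin: "cls \<phi> \<in> Lcarrier" unfolding Lcarrier_def by auto

lemma Lantisym: "x \<in> Lcarrier \<Longrightarrow> y \<in> Lcarrier \<Longrightarrow> Lle x y \<Longrightarrow> Lle y x \<Longrightarrow> x = y"
  unfolding Lcar by (elim exE) (simp add: Lle_cls cls_eq)

lemma meet_uniq: assumes "is_meet Lcarrier Lle a b m" shows "meet_in Lcarrier Lle a b = m"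
  unfolding meet_in_def
proof (rule the_equality)
  show "is_meet Lcarrier Lle a b m" by fact
  fix m' assume "is_meet Lcarrier Lle a b m'"
  then show "m' = m" using assms Lantisym unfolding is_meet_def by metis
qed

lemma join_uniq: assumes "is_join Lcarrier Lle a b m" shows "join_in Lcarrier Lle a b = m"
  unfolding join_in_def
proof (rule the_equality)
  show "is_join Lcarrier Lle a b m" by fact
  fix m' assume "is_join Lcarrier Lle a b m'"
  then show "m' = m" using assms Lantisym unfolding is_join_def by metis
qed

lemma is_meet_cls: "is_meet Lcarrier Lle (cls a) (cls b) (cls (And a b))"
  unfolding is_meet_def Lall by (simp add: Lin Lle_cls AND1 AND2 AND3)

lemma meet_cls: "meet_in Lcarrier Lle (cls a) (cls b) = cls (And a b)"
  by (rule meet_uniq[OF is_meet_cls])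

lemma is_join_cls: "is_join Lcarrier Lle (cls a) (cls b) (cls (Neg (And (Neg a) (Neg b))))"
proof -
  have 1: "fle a (Neg (And (Neg a) (Neg b)))" using fle_trans[OF DN2 CONTRA[OF AND1]] .
  have 2: "fle b (Neg (And (Neg a) (Neg b)))" using fle_trans[OF DN2 CONTRA[OF AND2]] .
  have 3: "fle (Neg (And (Neg a) (Neg b))) c" if "fle a c" "fle b c" for c
  proof -
    have "fle (Neg c) (And (Neg a) (Neg b))" using AND3[OF CONTRA[OF that(1)] CONTRA[OF that(2)]] .
    then show ?thesis using fle_trans[OF CONTRA DN1] by blast
  qed
  show ?thesis unfolding is_join_def Lall by (simp add: Lin Lle_cls 1 2 3)
qed

lemma join_cls: "join_in Lcarrier Lle (cls a) (cls b) = cls (Neg (And (Neg a) (Neg b)))"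
  by (rule join_uniq[OF is_join_cls])

lemma om: "fle a b \<Longrightarrow> cls (Neg (And (Neg a) (Neg (And (Neg a) b)))) = cls b"
proof -
  assume that: "fle a b"
  have A: "fle b (Neg (And (Neg a) (Neg (And (Neg a) b))))" using OM that .
  have "fle (Neg b) (And (Neg a) (Neg (And (Neg a) b)))"
    using AND3[OF CONTRA[OF that] CONTRA[OF AND2[of "Neg a" b]]] .
  then have "fle (Neg (And (Neg a) (Neg (And (Neg a) b)))) b"
    using fle_trans[OF CONTRA DN1] by blast
  then show ?thesis using A by (simp add: cls_eq)
qed

lemma topf: "fle c (Neg (And (Neg x) (Neg (Neg x))))"
  using fle_trans[OF DN2 CONTRA[OF BOT]] .

theorem theorem3p8:
  shows "orthomodular_lattice_on (Lcarrier :: 'a form set set) Lle Lneg \<and>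
    (\<forall>\<phi> \<psi> :: 'a form.
       cls (And \<phi> \<psi>) = meet_in Lcarrier Lle (cls \<phi>) (cls \<psi>) \<and>
       cls (Imp \<phi> \<psi>) = sasaki_in Lcarrier Lle Lneg (cls \<phi>) (cls \<psi>) \<and>
       cls (Neg \<phi>) = Lneg (cls \<phi>))"
proof (intro conjI allI)
  fix \<phi> \<psi> :: "'a form"
  show "cls (And \<phi> \<psi>) = meet_in Lcarrier Lle (cls \<phi>) (cls \<psi>)" by (simp add: meet_cls)
  show "cls (Neg \<phi>) = Lneg (cls \<phi>)" by (simp add: Lneg_cls)
  have "sasaki_in Lcarrier Lle Lneg (cls \<phi>) (cls \<psi>) = cls (Neg (And (Neg (Neg \<phi>)) (Neg (And \<phi> \<psi>))))"
    unfolding sasaki_in_def Lneg_cls meet_cls join_cls ..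
  moreover have "cls (Imp \<phi> \<psi>) = cls (Neg (And (Neg (Neg \<phi>)) (Neg (And \<phi> \<psi>))))"
    using IMP1[of \<phi> \<psi>] IMP2[of \<phi> \<psi>] by (simp add: cls_eq)
  ultimately show "cls (Imp \<phi> \<psi>) = sasaki_in Lcarrier Lle Lneg (cls \<phi>) (cls \<psi>)" by simp
next
  let ?S = "Lcarrier :: 'a form set set"
  have po: "partial_order_on' ?S Lle"
    unfolding partial_order_on'_def Lall
    by (auto simp: Lle_cls cls_eq fle_refl intro: fle_trans)
  have bot: "is_bot ?S Lle (cls (And x (Neg x)))" for x :: "'a form"
    unfolding is_bot_def Lall by (simp add: Lin Lle_cls BOT)
  have top: "is_top ?S Lle (cls (Neg (And (Neg x) (Neg (Neg x)))))" for x :: "'a form"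
    unfolding is_top_def Lall by (simp add: Lin Lle_cls topf)
  show "orthomodular_lattice_on ?S Lle Lneg"
    unfolding orthomodular_lattice_on_def
  proof (intro conjI)
    show "partial_order_on' ?S Lle" by (rule po)
    show "\<forall>a\<in>?S. \<forall>b\<in>?S. \<exists>m. is_meet ?S Lle a b m" unfolding Lall using is_meet_cls by blast
    show "\<forall>a\<in>?S. \<forall>b\<in>?S. \<exists>m. is_join ?S Lle a b m" unfolding Lall using is_join_cls by blast
    show "\<exists>z. is_bot ?S Lle z" using bot by blast
    show "\<exists>z. is_top ?S Lle z" using top by blast
    show "\<forall>a\<in>?S. Lneg a \<in> ?S" unfolding Lall by (simp add: Lneg_cls Lin)
    show "\<forall>a\<in>?S. Lneg (Lneg a) = a" unfolding Lall by (simp add: Lneg_cls cls_eq DN1 DN2)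
    show "\<forall>a\<in>?S. \<forall>b\<in>?S. Lle a b \<longrightarrow> Lle (Lneg b) (Lneg a)"
      unfolding Lall by (simp add: Lneg_cls Lle_cls CONTRA)
    show "\<forall>a\<in>?S. is_bot ?S Lle (meet_in ?S Lle a (Lneg a))"
      unfolding Lall by (simp add: Lneg_cls meet_cls bot)
    show "\<forall>a\<in>?S. is_top ?S Lle (join_in ?S Lle a (Lneg a))"
      unfolding Lall by (simp add: Lneg_cls join_cls top)
    show "\<forall>a\<in>?S. \<forall>b\<in>?S. Lle a b \<longrightarrow> join_in ?S Lle a (meet_in ?S Lle (Lneg a) b) = b"
      unfolding Lall by (simp add: Lneg_cls meet_cls join_cls Lle_cls om)
  qed
qed

end
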